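(* Let $M$ be a compact, connected, smooth Riemannian manifold without boundary, and let $X_1, X_2, \dots$ be $M$-valued random variables, each with the same distribution $\mu \in \mathcal{P}(M)$. Let $\mu_N = N^{-1}\sum_{n=1}^N \delta_{X_n}$. If $N^{-2}\sum_{1 \le m<n \le N} \alpha(X_m,X_n) \to 0$ as $N \to \infty$, then $\mathbb{E}\, W_2^2(\mu_N,\mu) \to 0$ as $N \to \infty$.
   Context: $\mathcal{P}(M)$ denotes the set of Borel probability measures on $M$, and $\rho$ the geodesic distance on $M$. The quadratic Wasserstein metric is $W_2(\mu,\nu)=\inf_{\pi}\left(\int_{M\times M}\rho(x,y)^2\,\mathrm{d}\pi(x,y)\right)^{1/2}$, the infimum over all couplings $\pi\in\mathcal{P}(M\times M)$ of $\mu$ and $\nu$ (i.e. with marginals $\mu$ and $\nu$). The $\alpha$-mixing coefficient of two $M$-valued random variables $X,Y$ is $\alpha(X,Y)=\sup_{A,B}|\Pr(X\in A, Y\in B)-\Pr(X\in A)\Pr(Y\in B)|$, the supremum over Borel sets $A,B\subseteq M$. *)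

theory Defs
  imports "HOL-Probability.Probability"
begin

definition couplings :: "'a measure \<Rightarrow> 'a measure \<Rightarrow> ('a \<times> 'a) measure set" where
  "couplings \<mu> \<nu> = {\<pi>. sets \<pi> = sets (\<mu> \<Otimes>\<^sub>M \<nu>) \<and>
      distr \<pi> \<mu> fst = \<mu> \<and> distr \<pi> \<nu> snd = \<nu>}"

definition W2 :: "('a::metric_space) measure \<Rightarrow> 'a measure \<Rightarrow> real" where
  "W2 \<mu> \<nu> = sqrt (enn2real (INF \<pi>\<in>couplings \<mu> \<nu>.
       \<integral>\<^sup>+ z. ennreal ((dist (fst z) (snd z))\<^sup>2) \<partial>\<pi>))"

definition empirical :: "nat \<Rightarrow> (nat \<Rightarrow> 'a::topological_space) \<Rightarrow> 'a measure" where
  "empirical N x = distr (uniform_count_measure {1..N}) borel x"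

definition alpha_mix :: "'s measure \<Rightarrow> ('s \<Rightarrow> 'a::topological_space) \<Rightarrow> ('s \<Rightarrow> 'a) \<Rightarrow> real" where
  "alpha_mix P X Y = (SUP AB\<in>sets borel \<times> sets borel.
      \<bar>measure P ({\<omega>\<in>space P. X \<omega> \<in> fst AB \<and> Y \<omega> \<in> snd AB})
       - measure P ({\<omega>\<in>space P. X \<omega> \<in> fst AB}) * measure P ({\<omega>\<in>space P. Y \<omega> \<in> snd AB})\<bar>)"

end

theory Submission
  imports Defs
begin

lemma fin_coupling:
  fixes a b :: "nat \<Rightarrow> real"
  assumes a0: "\<forall>i<K. a i \<ge> 0" and b0: "\<forall>i<K. b i \<ge> 0"
    and sa: "(\<Sum>i<K. a i) = 1" and sb: "(\<Sum>i<K. b i) = 1"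
  defines "m \<equiv> \<lambda>i. min (a i) (b i)"
  defines "r \<equiv> 1 - (\<Sum>i<K. m i)"
  defines "p \<equiv> \<lambda>i j. (if i = j then m i else 0) + (a i - m i) * (b j - m j) / r"
  shows "\<exists>p. (\<forall>i<K. \<forall>j<K. p i j \<ge> 0)
    \<and> (\<forall>i<K. (\<Sum>j<K. p i j) = a i)
    \<and> (\<forall>j<K. (\<Sum>i<K. p i j) = b j)
    \<and> (\<forall>i<K. \<forall>j<K. a i = 0 \<or> b j = 0 \<longrightarrow> p i j = 0)
    \<and> (\<Sum>i<K. \<Sum>j\<in>{..<K}-{i}. p i j) \<le> (\<Sum>i<K. \<bar>a i - b i\<bar>)"
proof -
  have ra: "r = (\<Sum>i<K. a i - m i)" unfolding r_def using sa by (simp add: sum_subtractf)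
  have rb: "r = (\<Sum>i<K. b i - m i)" unfolding r_def using sb by (simp add: sum_subtractf)
  have am: "\<forall>i<K. a i - m i \<ge> 0" "\<forall>i<K. b i - m i \<ge> 0" by (auto simp: m_def)
  have r0: "r \<ge> 0" unfolding ra using am by (auto intro: sum_nonneg)
  have z: "(a i - m i) * (b i - m i) = 0" for i by (auto simp: m_def min_def)
  have f1: "\<forall>i<K. \<forall>j<K. p i j \<ge> 0"
    using am r0 a0 b0 by (auto simp: p_def m_def)
  have rowsum: "(\<Sum>j<K. p i j) = a i" if "i < K" for i
  proof -
    have "(\<Sum>j<K. p i j) = m i + (a i - m i) / r * (\<Sum>j<K. b j - m j)"
      unfolding p_def using that by (simp add: sum.distrib sum_distrib_left)
    also have "\<dots> = a i"
    proof (cases "r = 0")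
      case True
      have "\<forall>j\<in>{..<K}. a j - m j = 0" using sum_nonneg_eq_0_iff[of "{..<K}" "\<lambda>j. a j - m j"] am True ra by auto
      then show ?thesis using that True by auto
    next
      case False then show ?thesis using rb by simp
    qed
    finally show ?thesis .
  qed
  then have f2: "\<forall>i<K. (\<Sum>j<K. p i j) = a i" by blast
  have f3: "\<forall>j<K. (\<Sum>i<K. p i j) = b j"
  proof (intro allI impI)
    fix j assume j: "j < K"
    have "(\<Sum>i<K. p i j) = m j + (\<Sum>i<K. a i - m i) * (b j - m j) / r"
      unfolding p_def using j by (simp add: sum.distrib sum_distrib_right sum_divide_distrib)
    also have "\<dots> = b j"
    proof (cases "r = 0")
      case True
      have "\<forall>i\<in>{..<K}. b i - m i = 0" using sum_nonneg_eq_0_iff[of "{..<K}" "\<lambda>i. b i - m i"] am True rb by auto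
      then show ?thesis using j True by auto
    next
      case False then show ?thesis using ra by simp
    qed
    finally show "(\<Sum>i<K. p i j) = b j" .
  qed
  have f4: "\<forall>i<K. \<forall>j<K. a i = 0 \<or> b j = 0 \<longrightarrow> p i j = 0"
    using a0 b0 by (auto simp: p_def m_def)
  have "(\<Sum>i<K. \<Sum>j\<in>{..<K}-{i}. p i j) = (\<Sum>i<K. a i - m i)"
  proof (rule sum.cong)
    fix i assume i: "i \<in> {..<K}"
    have "(\<Sum>j<K. p i j) = p i i + (\<Sum>j\<in>{..<K}-{i}. p i j)"
      using i by (simp add: sum.remove)
    then show "(\<Sum>j\<in>{..<K}-{i}. p i j) = a i - m i" using rowsum[of i] i z[of i]
      by (simp add: p_def)
  qed simp
  also have "\<dots> \<le> (\<Sum>i<K. \<bar>a i - b i\<bar>)"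
    by (rule sum_mono) (auto simp: m_def min_def)
  finally have f5: "(\<Sum>i<K. \<Sum>j\<in>{..<K}-{i}. p i j) \<le> (\<Sum>i<K. \<bar>a i - b i\<bar>)" .
  show ?thesis by (intro exI[of _ p] conjI f1 f2 f3 f4 f5)
qed

lemma coupling_rect:
  fixes M1 M2 :: "'a::metric_space measure" and C :: "nat \<Rightarrow> 'a set" and G :: "nat \<Rightarrow> nat \<Rightarrow> real"
  assumes P1: "prob_space M1" and P2: "prob_space M2"
    and S1: "sets M1 = sets borel" and S2: "sets M2 = sets borel"
    and C: "\<forall>i<K. C i \<in> sets borel"
    and G: "\<forall>i j. G i j \<ge> 0"
    and A: "A \<in> sets borel" and B: "B \<in> sets borel"
  defines "\<pi> \<equiv> density (M1 \<Otimes>\<^sub>M M2) (\<lambda>z. \<Sum>i<K. \<Sum>j<K. ennreal (G i j) * indicator (C i \<times> C j) z)"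
  shows "emeasure \<pi> (A \<times> B) = ennreal (\<Sum>i<K. \<Sum>j<K. G i j * measure M1 (C i \<inter> A) * measure M2 (C j \<inter> B))"
proof -
  interpret p1: prob_space M1 by fact
  interpret p2: prob_space M2 by fact
  interpret pp: pair_sigma_finite M1 M2 by unfold_locales
  have CC: "C i \<times> C j \<in> sets (M1 \<Otimes>\<^sub>M M2)" if "i < K" "j < K" for i j
    using C that S1 S2 by (auto intro!: pair_measureI)
  have meas: "(\<lambda>z. \<Sum>i<K. \<Sum>j<K. ennreal (G i j) * indicator (C i \<times> C j) z) \<in> borel_measurable (M1 \<Otimes>\<^sub>M M2)"
    by (intro borel_measurable_sum borel_measurable_times_ennreal borel_measurable_const borel_measurable_indicator) (auto intro: CC)
  have AB: "A \<times> B \<in> sets (M1 \<Otimes>\<^sub>M M2)" using A B S1 S2 by (auto intro!: pair_measureI)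
  have "emeasure \<pi> (A \<times> B) = (\<integral>\<^sup>+ z. (\<Sum>i<K. \<Sum>j<K. ennreal (G i j) * indicator (C i \<times> C j) z) * indicator (A \<times> B) z \<partial>(M1 \<Otimes>\<^sub>M M2))"
    unfolding \<pi>_def using meas AB by (simp add: emeasure_density)
  also have "\<dots> = (\<integral>\<^sup>+ z. (\<Sum>i<K. \<Sum>j<K. ennreal (G i j) * indicator ((C i \<inter> A) \<times> (C j \<inter> B)) z) \<partial>(M1 \<Otimes>\<^sub>M M2))"
    unfolding sum_distrib_right
    by (intro nn_integral_cong sum.cong refl) (auto simp: mult.assoc split: split_indicator)
  also have "\<dots> = (\<Sum>i<K. \<Sum>j<K. ennreal (G i j) * emeasure (M1 \<Otimes>\<^sub>M M2) ((C i \<inter> A) \<times> (C j \<inter> B)))"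
  proof -
    have m: "(C i \<inter> A) \<times> (C j \<inter> B) \<in> sets (M1 \<Otimes>\<^sub>M M2)" if "i < K" "j < K" for i j
      using C that S1 S2 A B by (auto intro!: pair_measureI)
    have "(\<integral>\<^sup>+ z. (\<Sum>i<K. \<Sum>j<K. ennreal (G i j) * indicator ((C i \<inter> A) \<times> (C j \<inter> B)) z) \<partial>(M1 \<Otimes>\<^sub>M M2))
      = (\<Sum>i<K. \<integral>\<^sup>+ z. (\<Sum>j<K. ennreal (G i j) * indicator ((C i \<inter> A) \<times> (C j \<inter> B)) z) \<partial>(M1 \<Otimes>\<^sub>M M2))"
      by (rule nn_integral_sum; intro borel_measurable_sum borel_measurable_times_ennreal borel_measurable_const borel_measurable_indicator m; simp)
    also have "\<dots> = (\<Sum>i<K. \<Sum>j<K. \<integral>\<^sup>+ z. ennreal (G i j) * indicator ((C i \<inter> A) \<times> (C j \<inter> B)) z \<partial>(M1 \<Otimes>\<^sub>M M2))"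
      by (intro sum.cong refl nn_integral_sum; intro borel_measurable_times_ennreal borel_measurable_const borel_measurable_indicator m; simp)
    also have "\<dots> = (\<Sum>i<K. \<Sum>j<K. ennreal (G i j) * emeasure (M1 \<Otimes>\<^sub>M M2) ((C i \<inter> A) \<times> (C j \<inter> B)))"
      by (intro sum.cong refl nn_integral_cmult_indicator) (use m in auto)
    finally show ?thesis .
  qed
  also have "\<dots> = (\<Sum>i<K. \<Sum>j<K. ennreal (G i j * measure M1 (C i \<inter> A) * measure M2 (C j \<inter> B)))"
  proof (intro sum.cong refl)
    fix i j assume "i \<in> {..<K}" "j \<in> {..<K}"
    then have "C i \<inter> A \<in> sets M1" "C j \<inter> B \<in> sets M2" using C S1 S2 A B by auto
    then show "ennreal (G i j) * emeasure (M1 \<Otimes>\<^sub>M M2) ((C i \<inter> A) \<times> (C j \<inter> B)) =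
        ennreal (G i j * measure M1 (C i \<inter> A) * measure M2 (C j \<inter> B))"
      using G by (simp add: p2.emeasure_pair_measure_Times p1.emeasure_eq_measure p2.emeasure_eq_measure ennreal_mult mult.assoc)
  qed
  also have "\<dots> = ennreal (\<Sum>i<K. \<Sum>j<K. G i j * measure M1 (C i \<inter> A) * measure M2 (C j \<inter> B))"
    using G by (simp add: sum_nonneg)
  finally show ?thesis .
qed

lemma W2_bound:
  fixes M1 M2 :: "'a::metric_space measure" and C :: "nat \<Rightarrow> 'a set"
  assumes P1: "prob_space M1" and P2: "prob_space M2"
    and S1: "sets M1 = sets borel" and S2: "sets M2 = sets borel"
    and C: "\<forall>i<K. C i \<in> sets borel"
    and disj: "disjoint_family_on C {..<K}"
    and cov: "(\<Union>i<K. C i) = UNIV"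
    and diam: "\<forall>i<K. \<forall>x\<in>C i. \<forall>y\<in>C i. dist x y \<le> \<epsilon>"
    and Dd: "\<forall>x y::'a. dist x y \<le> D" and e0: "\<epsilon> \<ge> 0"
  shows "(W2 M1 M2)\<^sup>2 \<le> \<epsilon>\<^sup>2 + D\<^sup>2 * (\<Sum>i<K. \<bar>measure M1 (C i) - measure M2 (C i)\<bar>)"
proof -
  interpret p1: prob_space M1 by fact
  interpret p2: prob_space M2 by fact
  have sp1: "space M1 = UNIV" using sets_eq_imp_space_eq[OF S1] by simp
  have sp2: "space M2 = UNIV" using sets_eq_imp_space_eq[OF S2] by simp
  define a where "a i = measure M1 (C i)" for i
  define b where "b i = measure M2 (C i)" for i
  have unionsum1: "measure M1 A = (\<Sum>i<K. measure M1 (C i \<inter> A))" if A: "A \<in> sets borel" for A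
  proof -
    have "A = (\<Union>i\<in>{..<K}. C i \<inter> A)" using cov by auto
    then have "measure M1 A = measure M1 (\<Union>i\<in>{..<K}. C i \<inter> A)" by simp
    also have "\<dots> = (\<Sum>i<K. measure M1 (C i \<inter> A))"
      by (rule p1.finite_measure_finite_Union) (use C A S1 in auto, use disj in \<open>unfold disjoint_family_on_def, blast\<close>)
    finally show ?thesis .
  qed
  have unionsum2: "measure M2 A = (\<Sum>i<K. measure M2 (C i \<inter> A))" if A: "A \<in> sets borel" for A
  proof -
    have "A = (\<Union>i\<in>{..<K}. C i \<inter> A)" using cov by auto
    then have "measure M2 A = measure M2 (\<Union>i\<in>{..<K}. C i \<inter> A)" by simp
    also have "\<dots> = (\<Sum>i<K. measure M2 (C i \<inter> A))"
      by (rule p2.finite_measure_finite_Union) (use C A S2 in auto, use disj in \<open>unfold disjoint_family_on_def, blast\<close>)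
    finally show ?thesis .
  qed
  have a0: "\<forall>i<K. a i \<ge> 0" and b0: "\<forall>i<K. b i \<ge> 0" by (auto simp: a_def b_def)
  have sa: "(\<Sum>i<K. a i) = 1" using unionsum1[of UNIV] p1.prob_space sp1 by (simp add: a_def)
  have sb: "(\<Sum>i<K. b i) = 1" using unionsum2[of UNIV] p2.prob_space sp2 by (simp add: b_def)
  note FC = fin_coupling[OF a0 b0 sa sb]
  obtain p where p0: "\<forall>i<K. \<forall>j<K. p i j \<ge> 0"
    and prow: "\<forall>i<K. (\<Sum>j<K. p i j) = a i"
    and pcol: "\<forall>j<K. (\<Sum>i<K. p i j) = b j"
    and pz: "\<forall>i<K. \<forall>j<K. a i = 0 \<or> b j = 0 \<longrightarrow> p i j = 0"
    and poff: "(\<Sum>i<K. \<Sum>j\<in>{..<K}-{i}. p i j) \<le> (\<Sum>i<K. \<bar>a i - b i\<bar>)"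
    using FC by (elim exE conjE)
  define G where "G i j = (if i < K \<and> j < K then p i j / (a i * b j) else 0)" for i j
  have G0: "\<forall>i j. G i j \<ge> 0" using p0 a0 b0 by (auto simp: G_def)
  define \<pi> where "\<pi> = density (M1 \<Otimes>\<^sub>M M2) (\<lambda>z. \<Sum>i<K. \<Sum>j<K. ennreal (G i j) * indicator (C i \<times> C j) z)"
  have rect: "emeasure \<pi> (A \<times> B) = ennreal (\<Sum>i<K. \<Sum>j<K. G i j * measure M1 (C i \<inter> A) * measure M2 (C j \<inter> B))"
    if "A \<in> sets borel" "B \<in> sets borel" for A B
    unfolding \<pi>_def by (rule coupling_rect[OF P1 P2 S1 S2 C G0 that])
  have Gb: "G i j * b j = p i j / a i" if "i < K" "j < K" for i j
    using that pz by (cases "b j = 0"; cases "a i = 0") (auto simp: G_def field_simps)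
  have Ga: "G i j * a i = p i j / b j" if "i < K" "j < K" for i j
    using that pz by (cases "b j = 0"; cases "a i = 0") (auto simp: G_def field_simps)
  have m1: "emeasure \<pi> (A \<times> UNIV) = emeasure M1 A" if A: "A \<in> sets borel" for A
  proof -
    have "(\<Sum>i<K. \<Sum>j<K. G i j * measure M1 (C i \<inter> A) * measure M2 (C j \<inter> UNIV))
        = (\<Sum>i<K. measure M1 (C i \<inter> A) * (\<Sum>j<K. G i j * b j))"
      by (simp add: b_def sum_distrib_left mult_ac)
    also have "\<dots> = (\<Sum>i<K. measure M1 (C i \<inter> A))"
    proof (intro sum.cong refl)
      fix i assume i: "i \<in> {..<K}"
      show "measure M1 (C i \<inter> A) * (\<Sum>j<K. G i j * b j) = measure M1 (C i \<inter> A)"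
      proof (cases "a i = 0")
        case True
        have "measure M1 (C i \<inter> A) \<le> a i" unfolding a_def
          by (rule p1.finite_measure_mono) (use C i S1 in auto)
        then have "measure M1 (C i \<inter> A) = 0" using True by (simp add: measure_nonneg order_antisym)
        then show ?thesis by simp
      next
        case False
        have "(\<Sum>j<K. G i j * b j) = (\<Sum>j<K. p i j) / a i"
          using Gb i by (simp add: sum_divide_distrib)
        also have "\<dots> = 1" using prow i False by simp
        finally show ?thesis by simp
      qed
    qed
    also have "\<dots> = measure M1 A" using unionsum1[OF A] by simp
    finally show ?thesis using rect[OF A] p1.emeasure_eq_measure by simp
  qed
  have m2: "emeasure \<pi> (UNIV \<times> B) = emeasure M2 B" if B: "B \<in> sets borel" for B
  proof -
    have "(\<Sum>i<K. \<Sum>j<K. G i j * measure M1 (C i \<inter> UNIV) * measure M2 (C j \<inter> B))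
        = (\<Sum>j<K. measure M2 (C j \<inter> B) * (\<Sum>i<K. G i j * a i))"
      apply (subst sum.swap)
      by (simp add: a_def sum_distrib_left mult_ac)
    also have "\<dots> = (\<Sum>j<K. measure M2 (C j \<inter> B))"
    proof (intro sum.cong refl)
      fix j assume j: "j \<in> {..<K}"
      show "measure M2 (C j \<inter> B) * (\<Sum>i<K. G i j * a i) = measure M2 (C j \<inter> B)"
      proof (cases "b j = 0")
        case True
        have "measure M2 (C j \<inter> B) \<le> b j" unfolding b_def
          by (rule p2.finite_measure_mono) (use C j S2 in auto)
        then have "measure M2 (C j \<inter> B) = 0" using True by (simp add: measure_nonneg order_antisym)
        then show ?thesis by simp
      next
        case False
        have "(\<Sum>i<K. G i j * a i) = (\<Sum>i<K. p i j) / b j"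
          using Ga j by (simp add: sum_divide_distrib)
        also have "\<dots> = 1" using pcol j False by simp
        finally show ?thesis by simp
      qed
    qed
    also have "\<dots> = measure M2 B" using unionsum2[OF B] by simp
    finally show ?thesis using rect[OF _ B] p2.emeasure_eq_measure by simp
  qed
  have mC: "emeasure \<pi> (C k \<times> C l) = ennreal (p k l)" if k: "k < K" and l: "l < K" for k l
  proof -
    have int1: "measure M1 (C i \<inter> C k) = (if i = k then a k else 0)" if "i < K" for i
      using disj that k by (auto simp: a_def disjoint_family_on_def)
    have int2: "measure M2 (C j \<inter> C l) = (if j = l then b l else 0)" if "j < K" for j
      using disj that l by (auto simp: b_def disjoint_family_on_def)
    have h: "(\<Sum>j<K. G k j * a k * (if j = l then b l else 0)) = G k l * a k * b l"
    proof -
      have "(\<Sum>j<K. G k j * a k * (if j = l then b l else 0)) = (\<Sum>j<K. if j = l then G k l * a k * b l else 0)"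
        by (rule sum.cong) auto
      then show ?thesis using l by simp
    qed
    have "(\<Sum>i<K. \<Sum>j<K. G i j * measure M1 (C i \<inter> C k) * measure M2 (C j \<inter> C l))
        = (\<Sum>i<K. if i = k then (\<Sum>j<K. if j = l then G k l * a k * b l else 0) else 0)"
      using h by (intro sum.cong refl) (auto simp: int1 int2)
    also have "\<dots> = G k l * a k * b l"
    proof -
      have "(\<Sum>j<K. if j = l then G k l * a k * b l else 0) = G k l * a k * b l" using l by simp
      then show ?thesis using k by simp
    qed
    also have "\<dots> = p k l" proof (cases "a k = 0")
      case False
      have "G k l * a k * b l = (G k l * b l) * a k" by (simp add: mult_ac)
      then show ?thesis using Gb[OF k l] False by simp
    qed (use pz k l in auto)
    finally show ?thesis using rect C k l by simp
  qed
  have setsP: "sets \<pi> = sets (M1 \<Otimes>\<^sub>M M2)" by (simp add: \<pi>_def)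
  have spP: "space \<pi> = UNIV" using sets_eq_imp_space_eq[OF setsP] by (simp add: space_pair_measure sp1 sp2)
  have coup: "\<pi> \<in> couplings M1 M2"
    unfolding couplings_def
  proof (intro CollectI conjI setsP)
    have fm: "fst \<in> measurable \<pi> M1" using measurable_cong_sets[OF setsP refl] measurable_fst by blast
    show "distr \<pi> M1 fst = M1"
    proof (rule measure_eqI)
      fix A assume "A \<in> sets (distr \<pi> M1 fst)"
      then have A: "A \<in> sets borel" using S1 by simp
      have "fst -` A \<inter> space \<pi> = A \<times> UNIV" using spP by auto
      then show "emeasure (distr \<pi> M1 fst) A = emeasure M1 A"
        using emeasure_distr[OF fm] A S1 m1[OF A] by simp
    qed simp
    have sm: "snd \<in> measurable \<pi> M2" using measurable_cong_sets[OF setsP refl] measurable_snd by blast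
    show "distr \<pi> M2 snd = M2"
    proof (rule measure_eqI)
      fix B assume "B \<in> sets (distr \<pi> M2 snd)"
      then have B: "B \<in> sets borel" using S2 by simp
      have "snd -` B \<inter> space \<pi> = UNIV \<times> B" using spP by auto
      then show "emeasure (distr \<pi> M2 snd) B = emeasure M2 B"
        using emeasure_distr[OF sm] B S2 m2[OF B] by simp
    qed simp
  qed
  define \<phi> where "\<phi> z = ennreal (\<epsilon>\<^sup>2) + ennreal (D\<^sup>2) * (\<Sum>i<K. \<Sum>j\<in>{..<K}-{i}. indicator (C i \<times> C j) z)" for z :: "'a \<times> 'a"
  have CCm: "C i \<times> C j \<in> sets \<pi>" if "i < K" "j < K" for i j
    using C that S1 S2 setsP by (auto intro!: pair_measureI)
  have pt: "ennreal ((dist (fst z) (snd z))\<^sup>2) \<le> \<phi> z" for z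
  proof -
    obtain x y where z: "z = (x, y)" by fastforce
    obtain i where i: "i < K" "x \<in> C i" using cov by blast
    obtain j where j: "j < K" "y \<in> C j" using cov by blast
    show ?thesis
    proof (cases "i = j")
      case True
      then have "dist x y \<le> \<epsilon>" using diam i j by blast
      then have "(dist x y)\<^sup>2 \<le> \<epsilon>\<^sup>2" by (simp add: power_mono)
      then have "ennreal ((dist x y)\<^sup>2) \<le> ennreal (\<epsilon>\<^sup>2)" by (rule ennreal_leI)
      also have "\<dots> \<le> \<phi> z" unfolding \<phi>_def by simp
      finally show ?thesis using z by simp
    next
      case False
      have "(1::ennreal) = indicator (C i \<times> C j) z" using i j z by simp
      also have "\<dots> \<le> (\<Sum>j\<in>{..<K}-{i}. indicator (C i \<times> C j) z)"
        by (rule member_le_sum) (use j False in auto)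
      also have "\<dots> \<le> (\<Sum>i<K. \<Sum>j\<in>{..<K}-{i}. indicator (C i \<times> C j) z)"
        by (rule member_le_sum[where f="\<lambda>i. \<Sum>j\<in>{..<K}-{i}. indicator (C i \<times> C j) z"]) (use i in auto)
      finally have s1: "1 \<le> (\<Sum>i<K. \<Sum>j\<in>{..<K}-{i}. indicator (C i \<times> C j) z :: ennreal)" .
      have "dist x y \<le> D" using Dd by blast
      then have "(dist x y)\<^sup>2 \<le> D\<^sup>2" by (simp add: power_mono)
      then have "ennreal ((dist x y)\<^sup>2) \<le> ennreal (D\<^sup>2) * 1" by (simp add: ennreal_leI)
      also have "\<dots> \<le> ennreal (D\<^sup>2) * (\<Sum>i<K. \<Sum>j\<in>{..<K}-{i}. indicator (C i \<times> C j) z)"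
        by (rule mult_left_mono[OF s1]) simp
      also have "\<dots> \<le> \<phi> z" unfolding \<phi>_def by simp
      finally show ?thesis using z by simp
    qed
  qed
  have "(\<integral>\<^sup>+ z. \<phi> z \<partial>\<pi>) = ennreal (\<epsilon>\<^sup>2) * emeasure \<pi> (space \<pi>) + ennreal (D\<^sup>2) * (\<Sum>i<K. \<Sum>j\<in>{..<K}-{i}. emeasure \<pi> (C i \<times> C j))"
  proof -
    have "(\<integral>\<^sup>+ z. \<phi> z \<partial>\<pi>) = (\<integral>\<^sup>+ z. ennreal (\<epsilon>\<^sup>2) \<partial>\<pi>) + (\<integral>\<^sup>+ z. ennreal (D\<^sup>2) * (\<Sum>i<K. \<Sum>j\<in>{..<K}-{i}. indicator (C i \<times> C j) z) \<partial>\<pi>)"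
      unfolding \<phi>_def
      by (rule nn_integral_add) (auto intro!: borel_measurable_sum borel_measurable_times_ennreal borel_measurable_indicator CCm)
    also have "(\<integral>\<^sup>+ z. ennreal (D\<^sup>2) * (\<Sum>i<K. \<Sum>j\<in>{..<K}-{i}. indicator (C i \<times> C j) z) \<partial>\<pi>)
        = ennreal (D\<^sup>2) * (\<integral>\<^sup>+ z. (\<Sum>i<K. \<Sum>j\<in>{..<K}-{i}. indicator (C i \<times> C j) z) \<partial>\<pi>)"
      by (rule nn_integral_cmult) (auto intro!: borel_measurable_sum borel_measurable_indicator CCm)
    also have "(\<integral>\<^sup>+ z. (\<Sum>i<K. \<Sum>j\<in>{..<K}-{i}. indicator (C i \<times> C j) z) \<partial>\<pi>)
        = (\<Sum>i<K. \<integral>\<^sup>+ z. (\<Sum>j\<in>{..<K}-{i}. indicator (C i \<times> C j) z) \<partial>\<pi>)"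
      by (rule nn_integral_sum) (auto intro!: borel_measurable_sum borel_measurable_indicator CCm)
    also have "\<dots> = (\<Sum>i<K. \<Sum>j\<in>{..<K}-{i}. \<integral>\<^sup>+ z. indicator (C i \<times> C j) z \<partial>\<pi>)"
      by (intro sum.cong refl nn_integral_sum) (auto intro!: borel_measurable_indicator CCm)
    also have "\<dots> = (\<Sum>i<K. \<Sum>j\<in>{..<K}-{i}. emeasure \<pi> (C i \<times> C j))"
      by (intro sum.cong refl nn_integral_indicator) (auto intro!: CCm)
    finally show ?thesis by simp
  qed
  also have "\<dots> = ennreal (\<epsilon>\<^sup>2 + D\<^sup>2 * (\<Sum>i<K. \<Sum>j\<in>{..<K}-{i}. p i j))"
  proof -
    have "emeasure \<pi> (space \<pi>) = 1" using m1[of UNIV] spP p1.emeasure_space_1 sp1 by simp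
    moreover have "(\<Sum>i<K. \<Sum>j\<in>{..<K}-{i}. emeasure \<pi> (C i \<times> C j)) = ennreal (\<Sum>i<K. \<Sum>j\<in>{..<K}-{i}. p i j)"
    proof -
      have "(\<Sum>i<K. \<Sum>j\<in>{..<K}-{i}. emeasure \<pi> (C i \<times> C j)) = (\<Sum>i<K. \<Sum>j\<in>{..<K}-{i}. ennreal (p i j))"
        using mC by (intro sum.cong refl) auto
      also have "\<dots> = (\<Sum>i<K. ennreal (\<Sum>j\<in>{..<K}-{i}. p i j))"
        by (intro sum.cong refl sum_ennreal) (use p0 in auto)
      also have "\<dots> = ennreal (\<Sum>i<K. \<Sum>j\<in>{..<K}-{i}. p i j)"
        by (rule sum_ennreal) (use p0 in \<open>auto intro!: sum_nonneg\<close>)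
      finally show ?thesis .
    qed
    moreover have sp: "(\<Sum>i<K. \<Sum>j\<in>{..<K}-{i}. p i j) \<ge> 0" using p0 by (auto intro!: sum_nonneg)
    ultimately show ?thesis by (simp add: ennreal_plus ennreal_mult)
  qed
  finally have intphi: "(\<integral>\<^sup>+ z. \<phi> z \<partial>\<pi>) = ennreal (\<epsilon>\<^sup>2 + D\<^sup>2 * (\<Sum>i<K. \<Sum>j\<in>{..<K}-{i}. p i j))" .
  define bnd where "bnd = \<epsilon>\<^sup>2 + D\<^sup>2 * (\<Sum>i<K. \<bar>a i - b i\<bar>)"
  have "(INF \<pi>\<in>couplings M1 M2. \<integral>\<^sup>+ z. ennreal ((dist (fst z) (snd z))\<^sup>2) \<partial>\<pi>) \<le> (\<integral>\<^sup>+ z. ennreal ((dist (fst z) (snd z))\<^sup>2) \<partial>\<pi>)"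
    by (rule INF_lower[OF coup])
  also have "\<dots> \<le> (\<integral>\<^sup>+ z. \<phi> z \<partial>\<pi>)" by (rule nn_integral_mono) (rule pt)
  also have "\<dots> \<le> ennreal bnd" unfolding intphi bnd_def
    using poff by (intro ennreal_leI add_left_mono mult_left_mono) auto
  finally have I: "(INF \<pi>\<in>couplings M1 M2. \<integral>\<^sup>+ z. ennreal ((dist (fst z) (snd z))\<^sup>2) \<partial>\<pi>) \<le> ennreal bnd" .
  have bnd0: "bnd \<ge> 0" unfolding bnd_def by (simp add: sum_nonneg)
  have "(W2 M1 M2)\<^sup>2 = enn2real (INF \<pi>\<in>couplings M1 M2. \<integral>\<^sup>+ z. ennreal ((dist (fst z) (snd z))\<^sup>2) \<partial>\<pi>)"
    unfolding W2_def by simp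
  also have "\<dots> \<le> enn2real (ennreal bnd)" by (rule enn2real_mono[OF I]) simp
  also have "\<dots> = bnd" using bnd0 by simp
  finally show ?thesis by (simp add: bnd_def a_def b_def)
qed

lemma (in prob_space) var_bound:
  fixes X :: "nat \<Rightarrow> 'a \<Rightarrow> 'b::topological_space" and \<mu> :: "'b measure"
  assumes Xm: "\<And>n. X n \<in> measurable M borel"
    and Xd: "\<And>n. distr M borel (X n) = \<mu>"
    and A: "A \<in> sets borel"
  defines "Y \<equiv> \<lambda>n \<omega>. indicator A (X n \<omega>) - measure \<mu> A"
  shows "integrable M (\<lambda>\<omega>. (\<Sum>n\<in>{1..N}. Y n \<omega>)\<^sup>2)"
    and "expectation (\<lambda>\<omega>. (\<Sum>n\<in>{1..N}. Y n \<omega>)\<^sup>2)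
           \<le> real N + 2 * (\<Sum>n\<in>{1..N}. \<Sum>m\<in>{1..<n}. alpha_mix M (X m) (X n))"
proof -
  define E where "E n = {\<omega>\<in>space M. X n \<omega> \<in> A}" for n
  define b where "b = measure \<mu> A"
  have Ee: "E n \<in> events" for n unfolding E_def using Xm A by measurable
  have pb: "prob (E n) = b" for n
  proof -
    have "measure \<mu> A = measure (distr M borel (X n)) A" using Xd by simp
    also have "\<dots> = measure M (X n -` A \<inter> space M)" using Xm A by (simp add: measure_distr)
    finally show ?thesis by (simp add: b_def E_def vimage_def Int_def conj_commute)
  qed
  have b01: "0 \<le> b" "b \<le> 1" using pb[of 0] by auto
  have Yi: "Y n \<omega> = indicator (E n) \<omega> - b" if "\<omega> \<in> space M" for n \<omega>
    using that by (simp add: Y_def E_def b_def indicator_def)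
  have Ym[measurable]: "Y n \<in> borel_measurable M" for n unfolding Y_def using Xm A by measurable
  have Yb: "\<bar>Y n \<omega>\<bar> \<le> 1" for n \<omega> using b01 by (auto simp: Y_def b_def indicator_def)
  define S where "S N \<omega> = (\<Sum>n\<in>{1..N}. Y n \<omega>)" for N \<omega>
  have Sm[measurable]: "S N \<in> borel_measurable M" for N unfolding S_def by measurable
  have Sb: "\<bar>S N \<omega>\<bar> \<le> real N" for N \<omega>
  proof -
    have "\<bar>S N \<omega>\<bar> \<le> (\<Sum>n\<in>{1..N}. \<bar>Y n \<omega>\<bar>)" unfolding S_def by (rule sum_abs)
    also have "\<dots> \<le> (\<Sum>n\<in>{1..N}. 1)" by (rule sum_mono) (rule Yb)
    finally show ?thesis by simp
  qed
  have intb: "integrable M f" if "f \<in> borel_measurable M" "\<And>\<omega>. \<bar>f \<omega>\<bar> \<le> B" for f :: "'a \<Rightarrow> real" and B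
    by (rule integrable_const_bound[where B=B]) (use that in auto)
  have iS2: "integrable M (\<lambda>\<omega>. (S N \<omega>)\<^sup>2)" for N
  proof (rule intb)
    show "\<bar>(S N \<omega>)\<^sup>2\<bar> \<le> (real N)\<^sup>2" for \<omega>
      using Sb[of N \<omega>] abs_le_square_iff[of "S N \<omega>" "real N"] by simp
  qed measurable
  then show "integrable M (\<lambda>\<omega>. (\<Sum>n\<in>{1..N}. Y n \<omega>)\<^sup>2)" by (simp add: S_def)
  have iSY: "integrable M (\<lambda>\<omega>. S N \<omega> * Y n \<omega>)" for N n
  proof (rule intb)
    show "\<bar>S N \<omega> * Y n \<omega>\<bar> \<le> real N * 1" for \<omega>
      unfolding abs_mult by (rule mult_mono) (use Sb Yb in auto)
  qed measurable
  have iYY: "integrable M (\<lambda>\<omega>. Y m \<omega> * Y n \<omega>)" for m n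
  proof (rule intb)
    show "\<bar>Y m \<omega> * Y n \<omega>\<bar> \<le> 1 * 1" for \<omega>
      unfolding abs_mult by (rule mult_mono) (use Yb in auto)
  qed measurable
  have iY2: "expectation (\<lambda>\<omega>. (Y n \<omega>)\<^sup>2) \<le> 1" for n
  proof -
    have "expectation (\<lambda>\<omega>. (Y n \<omega>)\<^sup>2) \<le> expectation (\<lambda>\<omega>. 1)"
    proof (rule integral_mono)
      show "integrable M (\<lambda>\<omega>. (Y n \<omega>)\<^sup>2)" using iYY[of n n] by (simp add: power2_eq_square)
      show "(Y n \<omega>)\<^sup>2 \<le> 1" for \<omega> using Yb[of n \<omega>] abs_le_square_iff[of "Y n \<omega>" 1] by simp
    qed simp
    then show ?thesis by (simp add: prob_space)
  qed
  have cov: "expectation (\<lambda>\<omega>. Y m \<omega> * Y n \<omega>) \<le> alpha_mix M (X m) (X n)" for m n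
  proof -
    have "expectation (\<lambda>\<omega>. Y m \<omega> * Y n \<omega>) = expectation (\<lambda>\<omega>. indicator (E m \<inter> E n) \<omega> - b * indicator (E m) \<omega> - b * indicator (E n) \<omega> + b\<^sup>2)"
      by (rule Bochner_Integration.integral_cong) (auto simp: Yi indicator_def power2_eq_square algebra_simps)
    also have "\<dots> = prob (E m \<inter> E n) - b * prob (E m) - b * prob (E n) + b\<^sup>2"
    proof -
      have ii: "integrable M (indicator F :: 'a \<Rightarrow> real)" if "F \<in> events" for F
        by (rule intb[of _ 1]) (use that in auto)
      have i1: "integrable M (\<lambda>\<omega>. indicator (E m \<inter> E n) \<omega> :: real)" using ii Ee by blast
      have i2: "integrable M (\<lambda>\<omega>. b * indicator (E m) \<omega> :: real)" using ii Ee by blast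
      have i3: "integrable M (\<lambda>\<omega>. b * indicator (E n) \<omega> :: real)" using ii Ee by blast
      have i12: "integrable M (\<lambda>\<omega>. indicator (E m \<inter> E n) \<omega> - b * indicator (E m) \<omega> :: real)"
        using i1 i2 by (rule Bochner_Integration.integrable_diff)
      have i123: "integrable M (\<lambda>\<omega>. indicator (E m \<inter> E n) \<omega> - b * indicator (E m) \<omega> - b * indicator (E n) \<omega> :: real)"
        using i12 i3 by (rule Bochner_Integration.integrable_diff)
      have "expectation (\<lambda>\<omega>. indicator (E m \<inter> E n) \<omega> - b * indicator (E m) \<omega> - b * indicator (E n) \<omega> + b\<^sup>2)
          = expectation (\<lambda>\<omega>. indicator (E m \<inter> E n) \<omega> - b * indicator (E m) \<omega> - b * indicator (E n) \<omega>) + expectation (\<lambda>\<omega>. b\<^sup>2)"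
        using i123 by (rule Bochner_Integration.integral_add) simp
      also have "expectation (\<lambda>\<omega>. indicator (E m \<inter> E n) \<omega> - b * indicator (E m) \<omega> - b * indicator (E n) \<omega>)
          = expectation (\<lambda>\<omega>. indicator (E m \<inter> E n) \<omega> - b * indicator (E m) \<omega>) - expectation (\<lambda>\<omega>. b * indicator (E n) \<omega>)"
        using i12 i3 by (rule Bochner_Integration.integral_diff)
      also have "expectation (\<lambda>\<omega>. indicator (E m \<inter> E n) \<omega> - b * indicator (E m) \<omega>)
          = expectation (\<lambda>\<omega>. indicator (E m \<inter> E n) \<omega>) - expectation (\<lambda>\<omega>. b * indicator (E m) \<omega>)"
        using i1 i2 by (rule Bochner_Integration.integral_diff)
      finally show ?thesis using Ee[of m] Ee[of n] by (simp add: prob_space)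
    qed
    also have "\<dots> = prob (E m \<inter> E n) - prob (E m) * prob (E n)"
      by (simp add: pb power2_eq_square)
    also have "\<dots> \<le> \<bar>prob (E m \<inter> E n) - prob (E m) * prob (E n)\<bar>" by simp
    also have "\<dots> \<le> alpha_mix M (X m) (X n)"
      unfolding alpha_mix_def
    proof (rule cSUP_upper2)
      show "(A, A) \<in> sets borel \<times> sets borel" using A by simp
      show "bdd_above ((\<lambda>AB. \<bar>prob {\<omega> \<in> space M. X m \<omega> \<in> fst AB \<and> X n \<omega> \<in> snd AB} -
               prob {\<omega> \<in> space M. X m \<omega> \<in> fst AB} * prob {\<omega> \<in> space M. X n \<omega> \<in> snd AB}\<bar>) `
             (sets borel \<times> sets borel))"
      proof (rule bdd_aboveI2)
        fix AB
        have h: "0 \<le> p \<Longrightarrow> p \<le> 1 \<Longrightarrow> 0 \<le> q \<Longrightarrow> q \<le> 1 \<Longrightarrow> 0 \<le> r \<Longrightarrow> r \<le> 1 \<Longrightarrow> \<bar>p - q * r\<bar> \<le> 1" for p q r :: real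
          using mult_le_one[of q r] mult_nonneg_nonneg[of q r] by (intro abs_leI; linarith)
        show "\<bar>prob {\<omega> \<in> space M. X m \<omega> \<in> fst AB \<and> X n \<omega> \<in> snd AB} -
               prob {\<omega> \<in> space M. X m \<omega> \<in> fst AB} * prob {\<omega> \<in> space M. X n \<omega> \<in> snd AB}\<bar> \<le> 1"
          by (rule h) auto
      qed
      show "\<bar>prob (E m \<inter> E n) - prob (E m) * prob (E n)\<bar> \<le> \<bar>prob {\<omega> \<in> space M. X m \<omega> \<in> fst (A, A) \<and> X n \<omega> \<in> snd (A, A)} -
               prob {\<omega> \<in> space M. X m \<omega> \<in> fst (A, A)} * prob {\<omega> \<in> space M. X n \<omega> \<in> snd (A, A)}\<bar>"
      proof -
        have "E m \<inter> E n = {\<omega>\<in>space M. X m \<omega> \<in> A \<and> X n \<omega> \<in> A}" by (auto simp: E_def)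
        then show ?thesis by (simp add: E_def)
      qed
    qed
    finally show ?thesis .
  qed
  show "expectation (\<lambda>\<omega>. (\<Sum>n\<in>{1..N}. Y n \<omega>)\<^sup>2)
           \<le> real N + 2 * (\<Sum>n\<in>{1..N}. \<Sum>m\<in>{1..<n}. alpha_mix M (X m) (X n))"
    unfolding S_def[symmetric]
  proof (induction N)
    case 0
    then show ?case by (simp add: S_def)
  next
    case (Suc N)
    have SS: "S (Suc N) \<omega> = S N \<omega> + Y (Suc N) \<omega>" for \<omega> by (simp add: S_def)
    have "expectation (\<lambda>\<omega>. (S (Suc N) \<omega>)\<^sup>2) = expectation (\<lambda>\<omega>. (S N \<omega>)\<^sup>2 + 2 * (S N \<omega> * Y (Suc N) \<omega>) + (Y (Suc N) \<omega>)\<^sup>2)"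
      by (rule Bochner_Integration.integral_cong) (simp_all add: SS power2_eq_square algebra_simps)
    also have "\<dots> = expectation (\<lambda>\<omega>. (S N \<omega>)\<^sup>2) + 2 * expectation (\<lambda>\<omega>. S N \<omega> * Y (Suc N) \<omega>) + expectation (\<lambda>\<omega>. (Y (Suc N) \<omega>)\<^sup>2)"
      using iS2 iSY iYY[of "Suc N" "Suc N"] by (simp add: power2_eq_square)
    also have "expectation (\<lambda>\<omega>. S N \<omega> * Y (Suc N) \<omega>) = (\<Sum>m\<in>{1..N}. expectation (\<lambda>\<omega>. Y m \<omega> * Y (Suc N) \<omega>))"
      unfolding S_def sum_distrib_right using iYY by (simp add: integral_sum)
    also have "\<dots> \<le> (\<Sum>m\<in>{1..N}. alpha_mix M (X m) (X (Suc N)))"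
      by (rule sum_mono) (rule cov)
    finally have "expectation (\<lambda>\<omega>. (S (Suc N) \<omega>)\<^sup>2) \<le> expectation (\<lambda>\<omega>. (S N \<omega>)\<^sup>2) + 2 * (\<Sum>m\<in>{1..N}. alpha_mix M (X m) (X (Suc N))) + 1"
      using iY2[of "Suc N"] by linarith
    moreover have "{1..<Suc N} = {1..N}" by auto
    ultimately show ?case using Suc.IH by (simp add: algebra_simps)
  qed
qed

lemma cells:
  assumes cpt: "compact (UNIV :: 'a::metric_space set)" and e: "\<epsilon> > 0"
  shows "\<exists>K (C :: nat \<Rightarrow> 'a set). (\<forall>i<K. C i \<in> sets borel) \<and> disjoint_family_on C {..<K}
     \<and> (\<Union>i<K. C i) = UNIV \<and> (\<forall>i<K. \<forall>x\<in>C i. \<forall>y\<in>C i. dist x y \<le> \<epsilon>)"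
proof -
  have cov0: "(UNIV::'a set) \<subseteq> (\<Union>c\<in>UNIV. ball c (\<epsilon> / 2))"
  proof
    fix x :: 'a show "x \<in> (\<Union>c\<in>UNIV. ball c (\<epsilon> / 2))" using e by (intro UN_I[of x]) auto
  qed
  have opn: "\<And>T. T \<in> UNIV \<Longrightarrow> open (ball T (\<epsilon>/2))" by simp
  have "\<exists>T::'a set. finite T \<and> UNIV \<subseteq> (\<Union>c\<in>T. ball c (\<epsilon>/2))"
    by (rule compactE_image[OF cpt opn cov0]) auto
  then obtain T :: "'a set" where T: "finite T" "UNIV \<subseteq> (\<Union>c\<in>T. ball c (\<epsilon>/2))"
    by blast
  obtain xs where xs: "set xs = T" using finite_list[OF T(1)] by blast
  define B where "B i = (if i < length xs then ball (xs ! i) (\<epsilon>/2) else {})" for i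
  define C where "C = disjointed B"
  define K where "K = length xs"
  have "range B \<subseteq> sets borel"
  proof
    fix S assume "S \<in> range B"
    then obtain i where "S = B i" by blast
    then show "S \<in> sets borel" by (simp add: B_def)
  qed
  then have Cb: "range C \<subseteq> sets borel" unfolding C_def by (rule sets.range_disjointed_sets)
  have f2: "disjoint_family_on C {..<K}" unfolding C_def
    by (rule disjoint_family_on_mono[OF subset_UNIV disjoint_family_disjointed])
  have f3: "(\<Union>i<K. C i) = UNIV"
  proof -
    have "(\<Union>i<K. C i) = (\<Union>i\<in>{0..<K}. B i)" unfolding C_def by (simp add: lessThan_atLeast0 finite_UN_disjointed_eq)
    also have "\<dots> = UNIV"
    proof -
      { fix x :: 'a
        obtain c where c: "c \<in> T" "x \<in> ball c (\<epsilon>/2)" using T(2) by blast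
        then obtain i where "i < length xs" "xs ! i = c" using xs in_set_conv_nth[of c xs] by auto
        then have "x \<in> (\<Union>i\<in>{0..<K}. B i)" using c by (auto simp: B_def K_def) }
      then show ?thesis by blast
    qed
    finally show ?thesis .
  qed
  have f4: "\<forall>i<K. \<forall>x\<in>C i. \<forall>y\<in>C i. dist x y \<le> \<epsilon>"
  proof (intro allI impI ballI)
    fix i x y assume i: "i < K" and x: "x \<in> C i" and y: "y \<in> C i"
    then have "x \<in> ball (xs ! i) (\<epsilon>/2)" "y \<in> ball (xs ! i) (\<epsilon>/2)"
      using disjointed_subset[of B i] by (auto simp: C_def B_def K_def)
    then have "dist (xs ! i) x < \<epsilon>/2" "dist (xs ! i) y < \<epsilon>/2" by auto
    moreover have "dist x y \<le> dist x (xs ! i) + dist (xs ! i) y" by (rule dist_triangle)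
    ultimately have "dist x y < \<epsilon>" by (simp add: dist_commute)
    then show "dist x y \<le> \<epsilon>" by simp
  qed
  have f1: "\<forall>i<K. C i \<in> sets borel" using Cb by auto
  show ?thesis by (rule exI[of _ K], rule exI[of _ C]) (intro conjI f1 f2 f3 f4)
qed

lemma empirical_facts:
  fixes x :: "nat \<Rightarrow> 'a::topological_space"
  assumes N: "N \<ge> 1"
  shows "prob_space (empirical N x)" and "sets (empirical N x) = sets borel"
    and "B \<in> sets borel \<Longrightarrow> measure (empirical N x) B = (\<Sum>n\<in>{1..N}. indicator B (x n)) / real N"
proof -
  have xm: "x \<in> measurable (uniform_count_measure {1..N}) borel"
    by (simp add: measurable_cong_sets[OF sets_uniform_count_measure_count_space refl])
  have "prob_space (uniform_count_measure {1..N})" using N by (intro prob_space_uniform_count_measure) auto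
  then show "prob_space (empirical N x)" unfolding empirical_def using xm by (rule prob_space.prob_space_distr)
  show "sets (empirical N x) = sets borel" by (simp add: empirical_def)
  assume B: "B \<in> sets borel"
  have "measure (empirical N x) B = measure (uniform_count_measure {1..N}) (x -` B \<inter> {1..N})"
    unfolding empirical_def using xm B by (simp add: measure_distr space_uniform_count_measure)
  also have "\<dots> = card (x -` B \<inter> {1..N}) / real N"
    by (subst measure_uniform_count_measure) auto
  also have "real (card (x -` B \<inter> {1..N})) = (\<Sum>n\<in>{1..N}. indicator B (x n))"
  proof -
    have "(\<Sum>n\<in>{1..N}. indicator B (x n) :: real) = (\<Sum>n\<in>{1..N}. indicator (x -` B) n)"
      by (intro sum.cong) (auto simp: indicator_def)
    also have "\<dots> = real (card ({1..N} \<inter> x -` B))" 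
      unfolding indicator_def by (simp add: sum.If_cases Int_def)
    finally show ?thesis by (simp add: Int_commute)
  qed
  finally show "measure (empirical N x) B = (\<Sum>n\<in>{1..N}. indicator B (x n)) / real N" .
qed

lemma main_bound:
  fixes P :: "'s measure" and X :: "nat \<Rightarrow> 's \<Rightarrow> 'a::metric_space" and \<mu> :: "'a measure"
    and C :: "nat \<Rightarrow> 'a set"
  assumes PP: "prob_space P"
    and Xm: "\<And>n. X n \<in> measurable P borel"
    and Xd: "\<And>n. distr P borel (X n) = \<mu>"
    and C: "\<forall>i<K. C i \<in> sets borel"
    and disj: "disjoint_family_on C {..<K}"
    and cov: "(\<Union>i<K. C i) = UNIV"
    and diam: "\<forall>i<K. \<forall>x\<in>C i. \<forall>y\<in>C i. dist x y \<le> \<epsilon>"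
    and Dd: "\<forall>x y::'a. dist x y \<le> D" and e0: "\<epsilon> \<ge> 0" and d0: "\<delta> > 0" and N: "N \<ge> 1"
  shows "(\<integral>\<^sup>+ \<omega>. ennreal ((W2 (empirical N (\<lambda>n. X n \<omega>)) \<mu>)\<^sup>2) \<partial>P)
     \<le> ennreal (\<epsilon>\<^sup>2 + D\<^sup>2 * (K * \<delta> + K * ((real N + 2 * (\<Sum>n\<in>{1..N}. \<Sum>m\<in>{1..<n}. alpha_mix P (X m) (X n))) / (real N)\<^sup>2) / \<delta>))"
proof -
  interpret P: prob_space P by fact
  define T where "T = (\<Sum>n\<in>{1..N}. \<Sum>m\<in>{1..<n}. alpha_mix P (X m) (X n))"
  have Pmu: "prob_space \<mu>" using P.prob_space_distr[OF Xm[of 0]] Xd[of 0] by simp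
  have Smu: "sets \<mu> = sets borel" using Xd[of 0] by (metis sets_distr)
  define b where "b i = measure \<mu> (C i)" for i
  define S where "S i \<omega> = (\<Sum>n\<in>{1..N}. indicator (C i) (X n \<omega>) - b i)" for i \<omega>
  have VB: "integrable P (\<lambda>\<omega>. (S i \<omega>)\<^sup>2) \<and> P.expectation (\<lambda>\<omega>. (S i \<omega>)\<^sup>2) \<le> real N + 2 * T" if "i < K" for i
    using P.var_bound[OF Xm Xd, where A="C i" and N=N] C that unfolding S_def b_def T_def by auto
  have Nr: "real N > 0" using N by simp
  define F where "F \<omega> = \<epsilon>\<^sup>2 + D\<^sup>2 * (K * \<delta> + (\<Sum>i<K. (S i \<omega>)\<^sup>2) / ((real N)\<^sup>2 * \<delta>))" for \<omega>
  have pw: "(W2 (empirical N (\<lambda>n. X n \<omega>)) \<mu>)\<^sup>2 \<le> F \<omega>" for \<omega>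
  proof -
    note EF = empirical_facts[OF N, where x="\<lambda>n. X n \<omega>"]
    have "(W2 (empirical N (\<lambda>n. X n \<omega>)) \<mu>)\<^sup>2 \<le> \<epsilon>\<^sup>2 + D\<^sup>2 * (\<Sum>i<K. \<bar>measure (empirical N (\<lambda>n. X n \<omega>)) (C i) - measure \<mu> (C i)\<bar>)"
      by (rule W2_bound[OF EF(1) Pmu EF(2) Smu C disj cov diam Dd e0])
    also have "\<dots> \<le> \<epsilon>\<^sup>2 + D\<^sup>2 * (\<Sum>i<K. (S i \<omega> / real N)\<^sup>2 / \<delta> + \<delta>)"
    proof (intro add_left_mono mult_left_mono sum_mono)
      fix i assume i: "i \<in> {..<K}"
      have eq: "measure (empirical N (\<lambda>n. X n \<omega>)) (C i) - measure \<mu> (C i) = S i \<omega> / real N"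
        using EF(3)[of "C i"] C i Nr unfolding S_def b_def
        by (simp add: sum_subtractf field_simps)
      have ab: "\<bar>z\<bar> \<le> z\<^sup>2 / \<delta> + \<delta>" for z :: real
      proof (cases "\<bar>z\<bar> \<le> \<delta>")
        case True then show ?thesis using d0 by (smt (verit) divide_nonneg_pos zero_le_power2)
      next
        case False
        then have "\<bar>z\<bar> * \<delta> \<le> \<bar>z\<bar> * \<bar>z\<bar>" using d0 by (intro mult_left_mono) auto
        then have "\<bar>z\<bar> \<le> z\<^sup>2 / \<delta>" using d0 by (simp add: field_simps power2_eq_square abs_mult_self_eq)
        then show ?thesis using d0 by simp
      qed
      show "\<bar>measure (empirical N (\<lambda>n. X n \<omega>)) (C i) - measure \<mu> (C i)\<bar> \<le> (S i \<omega> / real N)\<^sup>2 / \<delta> + \<delta>"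
        unfolding eq by (rule ab)
    qed simp
    also have "\<dots> = F \<omega>"
    proof -
      have "(\<Sum>i<K. (S i \<omega> / real N)\<^sup>2 / \<delta> + \<delta>) = (\<Sum>i<K. (S i \<omega>)\<^sup>2 / ((real N)\<^sup>2 * \<delta>)) + K * \<delta>"
        by (simp add: sum.distrib power_divide divide_divide_eq_left)
      then show ?thesis unfolding F_def by (simp add: sum_divide_distrib add.commute)
    qed
    finally show ?thesis .
  qed
  have iS: "integrable P (\<lambda>\<omega>. (S i \<omega>)\<^sup>2)" if "i < K" for i using VB that by blast
  have isum: "integrable P (\<lambda>\<omega>. \<Sum>i<K. (S i \<omega>)\<^sup>2)" by (rule Bochner_Integration.integrable_sum) (use iS in auto)
  have iF: "integrable P F" unfolding F_def
    by (intro Bochner_Integration.integrable_add P.integrable_const integrable_mult_right integrable_divide isum)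
  have "(\<integral>\<^sup>+ \<omega>. ennreal ((W2 (empirical N (\<lambda>n. X n \<omega>)) \<mu>)\<^sup>2) \<partial>P) \<le> (\<integral>\<^sup>+ \<omega>. ennreal (F \<omega>) \<partial>P)"
    by (rule nn_integral_mono) (use pw in \<open>auto intro: ennreal_leI\<close>)
  also have "\<dots> = ennreal (P.expectation F)"
  proof (rule nn_integral_eq_integral[OF iF])
    show "AE x in P. 0 \<le> F x" using pw by (auto intro: order_trans[OF zero_le_power2])
  qed
  also have "P.expectation F = \<epsilon>\<^sup>2 + D\<^sup>2 * (K * \<delta> + (\<Sum>i<K. P.expectation (\<lambda>\<omega>. (S i \<omega>)\<^sup>2)) / ((real N)\<^sup>2 * \<delta>))"
  proof -
    have "P.expectation F = P.expectation (\<lambda>\<omega>. \<epsilon>\<^sup>2 + D\<^sup>2 * (K * \<delta>) + (D\<^sup>2 / ((real N)\<^sup>2 * \<delta>)) * (\<Sum>i<K. (S i \<omega>)\<^sup>2))"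
      unfolding F_def by (rule Bochner_Integration.integral_cong) (simp_all add: algebra_simps)
    also have "\<dots> = \<epsilon>\<^sup>2 + D\<^sup>2 * (K * \<delta>) + (D\<^sup>2 / ((real N)\<^sup>2 * \<delta>)) * P.expectation (\<lambda>\<omega>. \<Sum>i<K. (S i \<omega>)\<^sup>2)"
      by (subst Bochner_Integration.integral_add) (auto intro!: integrable_mult_right isum simp: P.prob_space)
    also have "P.expectation (\<lambda>\<omega>. \<Sum>i<K. (S i \<omega>)\<^sup>2) = (\<Sum>i<K. P.expectation (\<lambda>\<omega>. (S i \<omega>)\<^sup>2))"
      by (rule Bochner_Integration.integral_sum) (use iS in auto)
    finally show ?thesis by (simp add: algebra_simps)
  qed
  also have "\<dots> \<le> \<epsilon>\<^sup>2 + D\<^sup>2 * (K * \<delta> + (\<Sum>i<K. real N + 2 * T) / ((real N)\<^sup>2 * \<delta>))"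
    using VB Nr d0 by (intro add_left_mono mult_left_mono divide_right_mono sum_mono) auto
  also have "\<dots> = \<epsilon>\<^sup>2 + D\<^sup>2 * (K * \<delta> + K * ((real N + 2 * T) / (real N)\<^sup>2) / \<delta>)"
    by simp
  finally show ?thesis unfolding T_def by (simp add: ennreal_leI)
qed

theorem theorem1:
  fixes P :: "'s measure" and X :: "nat \<Rightarrow> 's \<Rightarrow> 'a::metric_space" and \<mu> :: "'a measure"
  assumes "prob_space P"
    and "compact (UNIV :: 'a set)" and "connected (UNIV :: 'a set)"
    and "\<And>n. n \<ge> 1 \<Longrightarrow> X n \<in> measurable P borel"
    and "\<And>n. n \<ge> 1 \<Longrightarrow> distr P borel (X n) = \<mu>"
    and "(\<lambda>N. (\<Sum>n\<in>{1..N}. \<Sum>m\<in>{1..<n}. alpha_mix P (X m) (X n)) / (real N)\<^sup>2)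
           \<longlonglongrightarrow> 0"
  shows "(\<lambda>N. \<integral>\<^sup>+ \<omega>. ennreal ((W2 (empirical N (\<lambda>n. X n \<omega>)) \<mu>)\<^sup>2) \<partial>P) \<longlonglongrightarrow> 0"
proof -
  note PP = assms(1) and cpt = assms(2) and Xm0 = assms(4) and Xd0 = assms(5) and lim = assms(6)
  define X' where "X' n = X (max 1 n)" for n
  have Xm: "X' n \<in> measurable P borel" for n unfolding X'_def by (rule Xm0) simp
  have Xd: "distr P borel (X' n) = \<mu>" for n unfolding X'_def by (rule Xd0) simp
  define T where "T N = (\<Sum>n\<in>{1..N}. \<Sum>m\<in>{1..<n}. alpha_mix P (X m) (X n))" for N
  have TX': "T N = (\<Sum>n\<in>{1..N}. \<Sum>m\<in>{1..<n}. alpha_mix P (X' m) (X' n))" for N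
    unfolding T_def X'_def by (intro sum.cong refl) (auto simp: max_def)
  have empX': "empirical N (\<lambda>n. X n \<omega>) = empirical N (\<lambda>n. X' n \<omega>)" for N \<omega>
    unfolding empirical_def X'_def
    by (rule distr_cong) (auto simp: space_uniform_count_measure max_def)
  define V where "V N = (real N + 2 * T N) / (real N)\<^sup>2" for N
  have V0: "V \<longlonglongrightarrow> 0"
  proof -
    have "V N = inverse (real N) + 2 * (T N / (real N)\<^sup>2)" for N
    proof -
      have "V N = real N / (real N)\<^sup>2 + 2 * (T N / (real N)\<^sup>2)"
        unfolding V_def by (simp add: add_divide_distrib)
      also have "real N / (real N)\<^sup>2 = inverse (real N)"
        by (cases "N = 0") (simp_all add: power2_eq_square divide_inverse)
      finally show ?thesis .
    qed
    then have eq: "V = (\<lambda>N. inverse (real N) + 2 * (T N / (real N)\<^sup>2))" by (rule ext)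
    have l1: "(\<lambda>N. T N / (real N)\<^sup>2) \<longlonglongrightarrow> 0" using lim unfolding T_def .
    have "(\<lambda>N. inverse (real N) + 2 * (T N / (real N)\<^sup>2)) \<longlonglongrightarrow> 0"
      by (rule tendsto_add_zero[OF lim_inverse_n tendsto_mult_right_zero[OF l1]])
    then show ?thesis unfolding eq .
  qed
  obtain D0 where D0: "\<forall>x\<in>(UNIV::'a set). \<forall>y\<in>UNIV. dist x y \<le> D0"
    using compact_imp_bounded[OF cpt] unfolding bounded_two_points by (elim exE)
  define D where "D = \<bar>D0\<bar> + 1"
  have Dd: "\<forall>x y::'a. dist x y \<le> D" 
  proof (intro allI)
    fix x y :: 'a have "dist x y \<le> D0" using D0 by blast
    then show "dist x y \<le> D" unfolding D_def by linarith
  qed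
  have Dpos: "D > 0" unfolding D_def by simp
  show ?thesis
  proof (rule order_tendstoI)
    fix a :: ennreal assume "a < 0" then show "\<forall>\<^sub>F N in sequentially. a < (\<integral>\<^sup>+ \<omega>. ennreal ((W2 (empirical N (\<lambda>n. X n \<omega>)) \<mu>)\<^sup>2) \<partial>P)"
      by simp
  next
    fix e :: ennreal assume e: "0 < e"
    obtain a :: real where a: "a > 0" "ennreal a \<le> e"
    proof (cases "e = \<infinity>")
      case True then show ?thesis using that[of 1] by simp
    next
      case False then show ?thesis using that[of "enn2real e"] e
        by (simp add: enn2real_positive_iff less_top)
    qed
    define \<epsilon> where "\<epsilon> = sqrt a / 2"
    have e0: "\<epsilon> > 0" using a unfolding \<epsilon>_def by simp
    have e2: "\<epsilon>\<^sup>2 = a / 4" using a unfolding \<epsilon>_def by (simp add: power_divide)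
    obtain K and C :: "nat \<Rightarrow> 'a set" where C: "\<forall>i<K. C i \<in> sets borel" and disj: "disjoint_family_on C {..<K}"
      and cov: "(\<Union>i<K. C i) = UNIV" and diam: "\<forall>i<K. \<forall>x\<in>C i. \<forall>y\<in>C i. dist x y \<le> \<epsilon>"
      using cells[OF cpt e0] by (elim exE conjE)
    define c where "c = D\<^sup>2 * real K"
    have c0: "c \<ge> 0" unfolding c_def by simp
    define \<delta> where "\<delta> = a / (4 * (c + 1))"
    have d0: "\<delta> > 0" using a c0 unfolding \<delta>_def by simp
    have "\<forall>\<^sub>F N in sequentially. V N < a * \<delta> / (4 * (c + 1))"
      using V0 a d0 c0 by (intro order_tendstoD(2)) auto
    moreover have "\<forall>\<^sub>F N in sequentially. N \<ge> 1" by (rule eventually_ge_at_top)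
    ultimately show "\<forall>\<^sub>F N in sequentially. (\<integral>\<^sup>+ \<omega>. ennreal ((W2 (empirical N (\<lambda>n. X n \<omega>)) \<mu>)\<^sup>2) \<partial>P) < e"
    proof eventually_elim
      case (elim N)
      have "(\<integral>\<^sup>+ \<omega>. ennreal ((W2 (empirical N (\<lambda>n. X n \<omega>)) \<mu>)\<^sup>2) \<partial>P)
          = (\<integral>\<^sup>+ \<omega>. ennreal ((W2 (empirical N (\<lambda>n. X' n \<omega>)) \<mu>)\<^sup>2) \<partial>P)" by (simp add: empX')
      also have "\<dots> \<le> ennreal (\<epsilon>\<^sup>2 + D\<^sup>2 * (K * \<delta> + K * V N / \<delta>))"
      proof -
        have eqT: "(\<Sum>n\<in>{1..N}. \<Sum>m\<in>{1..<n}. alpha_mix P (X' m) (X' n)) = T N" by (rule TX'[symmetric])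
        show ?thesis using main_bound[where X=X', OF PP Xm Xd C disj cov diam Dd less_imp_le[OF e0] d0 elim(2)]
          unfolding eqT V_def[symmetric] .
      qed
      also have "\<dots> < ennreal a"
      proof (rule ennreal_lessI[OF a(1)])
        have h1: "c * \<delta> < a / 4" unfolding \<delta>_def using a c0 by (simp add: field_simps)
        have h2: "c * V N / \<delta> < a / 4"
        proof -
          have "c * V N \<le> c * (a * \<delta> / (4 * (c + 1)))" using elim(1) c0 by (intro mult_left_mono) auto
          also have "\<dots> = (c * \<delta>) * (a / (4 * (c + 1)))" by simp
          also have "\<dots> = (c * \<delta>) * \<delta>" unfolding \<delta>_def ..
          finally have "c * V N / \<delta> \<le> c * \<delta>" using d0 by (simp add: field_simps power2_eq_square)
          then show ?thesis using h1 by linarith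
        qed
        show "\<epsilon>\<^sup>2 + D\<^sup>2 * (K * \<delta> + K * V N / \<delta>) < a"
        proof -
          have "D\<^sup>2 * (K * \<delta> + K * V N / \<delta>) = c * \<delta> + c * V N / \<delta>"
            unfolding c_def by (simp add: algebra_simps)
          then have "\<epsilon>\<^sup>2 + D\<^sup>2 * (K * \<delta> + K * V N / \<delta>) = a / 4 + (c * \<delta> + c * V N / \<delta>)" using e2 by simp
          moreover have "a / 4 + (c * \<delta> + c * V N / \<delta>) < a" using h1 h2 a(1) by linarith
          ultimately show ?thesis by simp
        qed
      qed
      finally show ?case using a(2) by (rule less_le_trans)
    qed
  qed
qed

end
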